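(* Assume $\Phi_h=M_h=\mathbb{P}_1$. Then any solution $(\phi^{n+1},\mu^{n+1})$ of the J$_\varepsilon$-scheme satisfies $$\int_\Omega\big(I_h(\phi^{n+1}_-)\big)^2d\boldsymbol x\le C\sqrt{\varepsilon(1-\varepsilon)}\le C\sqrt{\varepsilon}\quad\text{and}\quad\int_\Omega\Big(I_h\big((\phi^{n+1}-1)_+\big)\Big)^2d\boldsymbol x\le C\sqrt{\varepsilon(1-\varepsilon)}\le C\sqrt{\varepsilon},$$ where $C$ depends on the initial energy $E(\phi^0)$ and on $\int_\Omega I_h(J_\varepsilon(\phi^0))\,d\boldsymbol x$.
   Context: $\Omega\subset\mathbb{R}^d$ ($d=1,2,3$) bounded, $\eta>0$, $\varepsilon\in(0,1/2)$. $f_-=\min\{f,0\}$, $f_+=\max\{f,0\}$. $F(\phi)=\frac1{4\eta^2}\phi^2(\phi-1)^2=F_c+F_e$ with $F_c(\phi)=\frac1{4\eta^2}(\phi^4-2\phi^3+\frac32\phi^2)$, $F_e(\phi)=-\frac1{8\eta^2}\phi^2$; $E(\phi)=\int_\Omega(\frac12|\nabla\phi|^2+F(\phi))d\boldsymbol x$. The interval $[0,T]$ is split into $N$ steps of size $\Delta t=T/N$, $n=0,\dots,N-1$. $\mathcal T_h$ is a structured triangulation of $\Omega$ in which every element $I$ has vertices $\boldsymbol x_0,\dots,\boldsymbol x_d$ with $\boldsymbol x_k-\boldsymbol x_0$ parallel to the $k$-th coordinate axis; $\Phi_h=M_h$ is the space of continuous piecewise $\mathbb{P}_1$ functions. $I_h$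 is nodal $\mathbb{P}_1$ interpolation, $(f,g)_h=\int_\Omega I_h(fg)\,d\boldsymbol x$, $(\cdot,\cdot)$ the $L^2$ product. $J(\phi)=(1-2\phi)\arcsin(\sqrt{1-\phi})+\sqrt{(1-\phi)\phi}+2\arcsin(\sqrt{1/2})\,\phi$ on $[0,1]$ (so $J''(\phi)=1/\sqrt{\phi(1-\phi)}$); $J_\varepsilon\in C^2(\mathbb{R})$ equals $J$ on $[\varepsilon,1-\varepsilon]$ and its second-order Taylor polynomial at $\varepsilon$ (resp. $1-\varepsilon$) for $\phi<\varepsilon$ (resp. $\phi>1-\varepsilon$). For $\phi\in\Phi_h$, $M^J_\varepsilon(\phi)$ is the piecewise constant diagonal matrix whose $k$-th entry on $I$ is $\Big(\frac{\phi(\boldsymbol x_k)-\phi(\boldsymbol x_0)}{J_\varepsilon'(\phi(\boldsymbol x_k))-J_\varepsilon'(\phi(\boldsymbol x_0))}\Big)^2$ if $\phi(\boldsymbol x_k)\neq\phi(\boldsymbol x_0)$ and $\big(1/J_\varepsilon''(\phi(\boldsymbol x_0))\big)^2$ otherwise. J$_\varepsilon$-scheme: given $\phi^n\in\Phi_h$ (starting from $\phi^0\in\Phi_h$), find $(\phi^{n+1},\mu^{n+1})\in\Phi_h\times M_h$ such that for all $(\bar\phi,\bar\mu)\in\Phi_h\times M_h$: $\frac1{\Delta t}(\phi^{n+1}-\phi^n,\bar\mu)_h+(M^J_\varepsilon(\phi^{n+1})\nabla\mu^{n+1},\nabla\bar\mu)=0$ and $(\nabla\phi^{n+1},\nabla\bar\phi)+(F_c'(\phi^{n+1})+F_e'(\phi^n),\bar\phi)=(\mu^{n+1},\bar\phi)_h$.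 *)

theory Defs
  imports "HOL-Analysis.Analysis"
begin

definition Ffun :: "real \<Rightarrow> real \<Rightarrow> real" where
  "Ffun \<eta> \<phi> = \<phi>\<^sup>2 * (\<phi> - 1)\<^sup>2 / (4 * \<eta>\<^sup>2)"

definition Fc :: "real \<Rightarrow> real \<Rightarrow> real" where
  "Fc \<eta> \<phi> = (\<phi> ^ 4 - 2 * \<phi> ^ 3 + 3 / 2 * \<phi>\<^sup>2) / (4 * \<eta>\<^sup>2)"

definition Fe :: "real \<Rightarrow> real \<Rightarrow> real" where
  "Fe \<eta> \<phi> = - \<phi>\<^sup>2 / (8 * \<eta>\<^sup>2)"

definition Jfun :: "real \<Rightarrow> real" where
  "Jfun \<phi> = (1 - 2 * \<phi>) * arcsin (sqrt (1 - \<phi>)) + sqrt ((1 - \<phi>) * \<phi>)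
             + 2 * arcsin (sqrt (1 / 2)) * \<phi>"

definition Jeps :: "real \<Rightarrow> real \<Rightarrow> real" where
  "Jeps \<epsilon> \<phi> =
     (if \<phi> < \<epsilon> then Jfun \<epsilon> + deriv Jfun \<epsilon> * (\<phi> - \<epsilon>)
                      + deriv (deriv Jfun) \<epsilon> / 2 * (\<phi> - \<epsilon>)\<^sup>2
      else if \<phi> > 1 - \<epsilon> then Jfun (1 - \<epsilon>) + deriv Jfun (1 - \<epsilon>) * (\<phi> - (1 - \<epsilon>))
                      + deriv (deriv Jfun) (1 - \<epsilon>) / 2 * (\<phi> - (1 - \<epsilon>))\<^sup>2
      else Jfun \<phi>)"

text \<open>An element is a pair (x0, h): its vertices are x0 and x_k = x0 + h_k e_k, k ranging
  over the coordinate index type 'd (so x_k - x0 is parallel to the k-th axis).\<close>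
type_synonym 'd elem = "(real^'d) \<times> (real^'d)"

definition vtx :: "'d::finite elem \<Rightarrow> 'd \<Rightarrow> real^'d" where
  "vtx I k = fst I + (snd I $ k) *\<^sub>R axis k 1"

definition verts :: "'d::finite elem \<Rightarrow> (real^'d) set" where
  "verts I = insert (fst I) (range (vtx I))"

definition elem_set :: "'d::finite elem \<Rightarrow> (real^'d) set" where
  "elem_set I = convex hull (verts I)"

definition structured_mesh :: "(real^'d::finite) set \<Rightarrow> 'd elem set \<Rightarrow> bool" where
  "structured_mesh \<Omega> Th \<longleftrightarrow>
     finite Th \<and> Th \<noteq> {} \<and>
     (\<forall>I\<in>Th. \<forall>k. snd I $ k \<noteq> 0) \<and>
     inj_on verts Th \<and>
     (\<forall>I\<in>Th. \<forall>I'\<in>Th. elem_set I \<inter> elem_set I' = convex hull (verts I \<inter> verts I')) \<and>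
     \<Omega> = \<Union> (elem_set ` Th)"

text \<open>A function of Phi_h = M_h is given by its nodal values v (only values at mesh
  nodes matter).\<close>
definition p1grad :: "'d::finite elem \<Rightarrow> (real^'d \<Rightarrow> real) \<Rightarrow> real^'d" where
  "p1grad I v = (\<chi> k. (v (vtx I k) - v (fst I)) / (snd I $ k))"

definition p1loc :: "'d::finite elem \<Rightarrow> (real^'d \<Rightarrow> real) \<Rightarrow> real^'d \<Rightarrow> real" where
  "p1loc I v x = v (fst I) + p1grad I v \<bullet> (x - fst I)"

definition mint :: "'d::finite elem set \<Rightarrow> ('d elem \<Rightarrow> real^'d \<Rightarrow> real) \<Rightarrow> real" where
  "mint Th G = (\<Sum>I\<in>Th. integral (elem_set I) (G I))"

text \<open>Mass-lumped product (f,g)_h = integral of I_h(f g).\<close>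
definition lumped :: "'d::finite elem set \<Rightarrow> (real^'d \<Rightarrow> real) \<Rightarrow> (real^'d \<Rightarrow> real) \<Rightarrow> real" where
  "lumped Th f g = mint Th (\<lambda>I. p1loc I (\<lambda>y. f y * g y))"

definition energy :: "real \<Rightarrow> 'd::finite elem set \<Rightarrow> (real^'d \<Rightarrow> real) \<Rightarrow> real" where
  "energy \<eta> Th u = mint Th (\<lambda>I x. (norm (p1grad I u))\<^sup>2 / 2 + Ffun \<eta> (p1loc I u x))"

definition MJ :: "real \<Rightarrow> (real^'d::finite \<Rightarrow> real) \<Rightarrow> 'd elem \<Rightarrow> 'd \<Rightarrow> real" where
  "MJ \<epsilon> \<phi> I k =
     (let a = \<phi> (fst I); b = \<phi> (vtx I k) in
      if b \<noteq> a then ((b - a) / (deriv (Jeps \<epsilon>) b - deriv (Jeps \<epsilon>) a))\<^sup>2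
      else (1 / deriv (deriv (Jeps \<epsilon>)) a)\<^sup>2)"

definition Jeps_step :: "real \<Rightarrow> real \<Rightarrow> 'd::finite elem set \<Rightarrow> real \<Rightarrow>
    (real^'d \<Rightarrow> real) \<Rightarrow> (real^'d \<Rightarrow> real) \<Rightarrow> (real^'d \<Rightarrow> real) \<Rightarrow> bool" where
  "Jeps_step \<eta> \<epsilon> Th dt phin phi1 mu1 \<longleftrightarrow>
     (\<forall>mubar. lumped Th (\<lambda>y. phi1 y - phin y) mubar / dt
        + mint Th (\<lambda>I x. \<Sum>k\<in>UNIV. MJ \<epsilon> phi1 I k * (p1grad I mu1 $ k) * (p1grad I mubar $ k)) = 0) \<and>
     (\<forall>phibar. mint Th (\<lambda>I x. p1grad I phi1 \<bullet> p1grad I phibar)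
        + mint Th (\<lambda>I x. (deriv (Fc \<eta>) (p1loc I phi1 x) + deriv (Fe \<eta>) (p1loc I phin x))
                          * p1loc I phibar x)
        = lumped Th mu1 phibar)"

definition Jint :: "real \<Rightarrow> 'd::finite elem set \<Rightarrow> (real^'d \<Rightarrow> real) \<Rightarrow> real" where
  "Jint \<epsilon> Th u = mint Th (\<lambda>I. p1loc I (\<lambda>y. Jeps \<epsilon> (u y)))"

definition neg_sq :: "'d::finite elem set \<Rightarrow> (real^'d \<Rightarrow> real) \<Rightarrow> real" where
  "neg_sq Th u = mint Th (\<lambda>I x. (p1loc I (\<lambda>y. min (u y) 0) x)\<^sup>2)"

definition pos_sq :: "'d::finite elem set \<Rightarrow> (real^'d \<Rightarrow> real) \<Rightarrow> real" where
  "pos_sq Th u = mint Th (\<lambda>I x. (p1loc I (\<lambda>y. max (u y - 1) 0) x)\<^sup>2)"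

end

theory Submission
  imports Defs
begin

definition a0 :: real where "a0 = arcsin (sqrt (1/2))"
definition Jp :: "real \<Rightarrow> real" where "Jp x = 2*a0 - 2*arcsin (sqrt (1 - x))"
definition Jpp :: "real \<Rightarrow> real" where "Jpp x = 1 / sqrt (x * (1 - x))"

lemma Jfun_deriv:
  assumes "0 < x" "x < 1"
  shows "(Jfun has_real_derivative Jp x) (at x)"
proof -
  have s1: "sqrt (1 - x) < 1" using assms by (simp add: real_sqrt_less_iff)
  have s0: "0 < sqrt (1-x)" using assms by simp
  have sq: "(sqrt (1-x))\<^sup>2 = 1 - x" using assms by simp
  have e: "Jfun = (\<lambda>x. (1 - 2 * x) * arcsin (sqrt (1 - x)) + sqrt ((1 - x) * x) + 2 * a0 * x)"
    by (rule ext) (simp add: Jfun_def a0_def)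
  have d1: "((\<lambda>x. 1 - x) has_real_derivative -1) (at x)"
    by (auto intro!: derivative_eq_intros)
  have d2: "((\<lambda>x. sqrt (1 - x)) has_real_derivative inverse (sqrt (1-x)) / 2 * (-1)) (at x)"
    by (rule DERIV_chain'[OF d1 DERIV_real_sqrt]) (use assms in simp)
  have d3: "((\<lambda>x. arcsin (sqrt (1 - x))) has_real_derivative
       inverse (sqrt (1 - (sqrt (1-x))\<^sup>2)) * (inverse (sqrt (1-x)) / 2 * (-1))) (at x)"
    by (rule DERIV_chain'[OF d2 DERIV_arcsin]) (use s0 s1 in linarith)+
  have d4: "((\<lambda>x. (1 - x) * x) has_real_derivative (1 - 2*x)) (at x)"
    by (auto intro!: derivative_eq_intros)
  have d5: "((\<lambda>x. sqrt ((1 - x) * x)) has_real_derivative inverse (sqrt ((1-x)*x)) / 2 * (1 - 2*x)) (at x)"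
    by (rule DERIV_chain'[OF d4 DERIV_real_sqrt]) (use assms in simp)
  have d6: "((\<lambda>x. 1 - 2 * x) has_real_derivative -2) (at x)"
    by (auto intro!: derivative_eq_intros)
  have d7: "((\<lambda>x. 2 * a0 * x) has_real_derivative 2 * a0) (at x)"
    by (auto intro!: derivative_eq_intros)
  have d: "((\<lambda>x. (1 - 2 * x) * arcsin (sqrt (1 - x)) + sqrt ((1 - x) * x) + 2 * a0 * x) has_real_derivative
     ((1 - 2*x) * (inverse (sqrt (1 - (sqrt (1-x))\<^sup>2)) * (inverse (sqrt (1-x)) / 2 * (-1))) + (-2) * arcsin (sqrt (1-x)))
      + inverse (sqrt ((1-x)*x)) / 2 * (1 - 2*x) + 2 * a0) (at x)"
    by (intro DERIV_add DERIV_mult'[OF d6 d3] d5 d7)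
  have "((1 - 2*x) * (inverse (sqrt (1 - (sqrt (1-x))\<^sup>2)) * (inverse (sqrt (1-x)) / 2 * (-1))) + (-2) * arcsin (sqrt (1-x)))
      + inverse (sqrt ((1-x)*x)) / 2 * (1 - 2*x) + 2 * a0 = Jp x"
    unfolding real_sqrt_mult using assms by (simp add: sq Jp_def field_simps)
  with d show ?thesis unfolding e by simp
qed

lemma Jp_deriv:
  assumes "0 < x" "x < 1"
  shows "(Jp has_real_derivative Jpp x) (at x)"
proof -
  have s1: "sqrt (1 - x) < 1" using assms by (simp add: real_sqrt_less_iff)
  have s0: "0 < sqrt (1-x)" using assms by simp
  have sq: "(sqrt (1-x))\<^sup>2 = 1 - x" using assms by simp
  have d1: "((\<lambda>x. 1 - x) has_real_derivative -1) (at x)"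
    by (auto intro!: derivative_eq_intros)
  have d2: "((\<lambda>x. sqrt (1 - x)) has_real_derivative inverse (sqrt (1-x)) / 2 * (-1)) (at x)"
    by (rule DERIV_chain'[OF d1 DERIV_real_sqrt]) (use assms in simp)
  have d3: "((\<lambda>x. arcsin (sqrt (1 - x))) has_real_derivative
       inverse (sqrt (1 - (sqrt (1-x))\<^sup>2)) * (inverse (sqrt (1-x)) / 2 * (-1))) (at x)"
    by (rule DERIV_chain'[OF d2 DERIV_arcsin]) (use s0 s1 in linarith)+
  have d: "((\<lambda>x. 2*a0 - 2*arcsin (sqrt (1 - x))) has_real_derivative
       0 - 2 * (inverse (sqrt (1 - (sqrt (1-x))\<^sup>2)) * (inverse (sqrt (1-x)) / 2 * (-1)))) (at x)"
    by (intro DERIV_diff DERIV_cmult d3 DERIV_const)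
  have "0 - 2 * (inverse (sqrt (1 - (sqrt (1-x))\<^sup>2)) * (inverse (sqrt (1-x)) / 2 * (-1))) = Jpp x"
    unfolding Jpp_def real_sqrt_mult using assms by (simp add: sq field_simps)
  with d show ?thesis unfolding Jp_def[abs_def] by simp
qed

lemma deriv_split:
  fixes f :: "real \<Rightarrow> real"
  assumes "(f has_real_derivative D) (at x within {..x})"
    and "(f has_real_derivative D) (at x within {x..})"
  shows "(f has_real_derivative D) (at x)"
proof -
  have "((\<lambda>y. (f y - f x) / (y - x)) \<longlongrightarrow> D) (at x within {..x} \<union> {x..})"
    using assms by (simp add: Lim_within_Un has_field_derivative_iff)
  moreover have "{..x} \<union> {x..} = UNIV" by auto
  ultimately show ?thesis by (simp add: has_field_derivative_iff)
qed

lemma deriv_Jfun: "0 < x \<Longrightarrow> x < 1 \<Longrightarrow> deriv Jfun x = Jp x"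
  by (rule DERIV_imp_deriv[OF Jfun_deriv])

lemma deriv2_Jfun: assumes "0 < x" "x < 1" shows "deriv (deriv Jfun) x = Jpp x"
proof -
  have "(deriv Jfun has_real_derivative Jpp x) (at x)"
    by (rule has_field_derivative_transform_within_open[OF Jp_deriv[OF assms], of "{0<..<1}"])
       (use assms in \<open>auto simp: deriv_Jfun\<close>)
  then show ?thesis by (rule DERIV_imp_deriv)
qed

definition gpe :: "real \<Rightarrow> real \<Rightarrow> real" where
  "gpe e x = (if x < e then Jp e + Jpp e * (x - e)
     else if x > 1 - e then Jp (1 - e) + Jpp (1 - e) * (x - (1 - e)) else Jp x)"

lemma Jeps_eq:
  assumes "0 < e" "e < 1/2"
  shows "Jeps e x = (if x < e then Jfun e + Jp e * (x - e) + Jpp e / 2 * (x - e)\<^sup>2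
      else if x > 1 - e then Jfun (1 - e) + Jp (1 - e) * (x - (1 - e)) + Jpp (1 - e) / 2 * (x - (1 - e))\<^sup>2
      else Jfun x)"
  using assms by (simp add: Jeps_def deriv_Jfun deriv2_Jfun)

lemma Jeps_deriv:
  assumes e: "0 < e" "e < 1/2"
  shows "(Jeps e has_real_derivative gpe e x) (at x)"
proof -
  define L where "L = (\<lambda>x. Jfun e + Jp e * (x - e) + Jpp e / 2 * (x - e)\<^sup>2)"
  define R where "R = (\<lambda>x. Jfun (1 - e) + Jp (1 - e) * (x - (1 - e)) + Jpp (1 - e) / 2 * (x - (1 - e))\<^sup>2)"
  have JL: "\<And>x. x \<le> e \<Longrightarrow> Jeps e x = L x" using e by (auto simp: Jeps_eq L_def)
  have JR: "\<And>x. x \<ge> 1 - e \<Longrightarrow> Jeps e x = R x" using e by (auto simp: Jeps_eq R_def)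
  have JM: "\<And>x. e \<le> x \<Longrightarrow> x \<le> 1 - e \<Longrightarrow> Jeps e x = Jfun x" using e by (auto simp: Jeps_eq)
  have dL: "\<And>x. (L has_real_derivative Jp e + Jpp e * (x - e)) (at x)"
    unfolding L_def by (auto intro!: derivative_eq_intros simp: power2_eq_square algebra_simps)
  have dR: "\<And>x. (R has_real_derivative Jp (1 - e) + Jpp (1 - e) * (x - (1 - e))) (at x)"
    unfolding R_def by (auto intro!: derivative_eq_intros simp: power2_eq_square algebra_simps)
  consider "x < e" | "x = e" | "e < x \<and> x < 1 - e" | "x = 1 - e" | "x > 1 - e" by linarith
  then show ?thesis
  proof cases
    case 1
    have g: "gpe e x = Jp e + Jpp e * (x - e)" using 1 by (simp add: gpe_def)
    show ?thesis unfolding g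
      by (rule has_field_derivative_transform_within_open[OF dL[of x], of "{..<e}"])
         (use 1 JL in \<open>auto\<close>)
  next
    case 5
    have g: "gpe e x = Jp (1 - e) + Jpp (1 - e) * (x - (1 - e))" using 5 e by (simp add: gpe_def)
    show ?thesis unfolding g
      by (rule has_field_derivative_transform_within_open[OF dR[of x], of "{1-e<..}"])
         (use 5 JR in \<open>auto\<close>)
  next
    case 3
    have g: "gpe e x = Jp x" using 3 by (simp add: gpe_def)
    show ?thesis unfolding g
      by (rule has_field_derivative_transform_within_open[OF Jfun_deriv[of x], of "{e<..<1-e}"])
         (use 3 JM e in \<open>auto\<close>)
  next
    case 2
    have g: "gpe e x = Jp e" using 2 e by (simp add: gpe_def)
    have "(L has_real_derivative Jp e) (at e within {..e})"
      using dL[of e, THEN has_field_derivative_at_within] by simp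
    then have a: "(Jeps e has_real_derivative Jp e) (at e within {..e})"
      by (rule has_field_derivative_transform_within[where d=1]) (auto simp: JL)
    have b: "(Jeps e has_real_derivative Jp e) (at e within {e..})"
      by (rule has_field_derivative_transform_within[where d="1 - 2*e",
            OF Jfun_deriv[THEN has_field_derivative_at_within]])
         (use e in \<open>auto simp: dist_real_def intro!: JM[symmetric]\<close>)
    show ?thesis using deriv_split[OF a b] g 2 by simp
  next
    case 4
    have g: "gpe e x = Jp (1 - e)" using 4 e by (simp add: gpe_def)
    have "(R has_real_derivative Jp (1 - e)) (at (1 - e) within {1 - e..})"
      using dR[of "1 - e", THEN has_field_derivative_at_within] by simp
    then have b: "(Jeps e has_real_derivative Jp (1 - e)) (at (1 - e) within {1 - e..})"
      by (rule has_field_derivative_transform_within[where d=1]) (auto simp: JR)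
    have a: "(Jeps e has_real_derivative Jp (1 - e)) (at (1 - e) within {..1 - e})"
      by (rule has_field_derivative_transform_within[where d="1 - 2*e",
            OF Jfun_deriv[THEN has_field_derivative_at_within]])
         (use e in \<open>auto simp: dist_real_def intro!: JM[symmetric]\<close>)
    show ?thesis using deriv_split[OF a b] g 4 by simp
  qed
qed

lemma deriv_Jeps: "0 < e \<Longrightarrow> e < 1/2 \<Longrightarrow> deriv (Jeps e) x = gpe e x"
  by (intro DERIV_imp_deriv Jeps_deriv)

lemma arcsin_sqrt_mono:
  assumes "0 \<le> a" "a \<le> b" "b \<le> 1"
  shows "arcsin (sqrt a) \<le> arcsin (sqrt b)"
proof (rule arcsin_le_arcsin)
  have "0 \<le> sqrt a" using assms by simp
  then show "- 1 \<le> sqrt a" by linarith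
  show "sqrt a \<le> sqrt b" using assms by simp
  show "sqrt b \<le> 1" using assms by simp
qed

lemma arcsin_sqrt_nonneg: "0 \<le> a \<Longrightarrow> a \<le> 1 \<Longrightarrow> 0 \<le> arcsin (sqrt a)"
  using arcsin_sqrt_mono[of 0 a] by simp

lemma Jp_mono: "0 \<le> x \<Longrightarrow> x \<le> y \<Longrightarrow> y \<le> 1 \<Longrightarrow> Jp x \<le> Jp y"
  unfolding Jp_def using arcsin_sqrt_mono[of "1 - y" "1 - x"] by simp

lemma Jpp_pos: "0 < e \<Longrightarrow> e < 1 \<Longrightarrow> 0 < Jpp e"
  unfolding Jpp_def by simp

lemma Jpp_sym: "Jpp (1 - e) = Jpp e"
  unfolding Jpp_def by (simp add: mult.commute)

lemma Jp_le0: assumes "e \<le> 1/2" "0 \<le> e" shows "Jp e \<le> 0"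
proof -
  have "arcsin (sqrt (1/2)) \<le> arcsin (sqrt (1 - e))"
    using assms by (intro arcsin_sqrt_mono) auto
  then show ?thesis unfolding Jp_def a0_def by simp
qed

lemma Jp_ge0: assumes "e \<le> 1/2" "0 \<le> e" shows "Jp (1 - e) \<ge> 0"
proof -
  have "arcsin (sqrt e) \<le> arcsin (sqrt (1/2))"
    using assms by (intro arcsin_sqrt_mono) auto
  then show ?thesis unfolding Jp_def a0_def by simp
qed

lemma Jfun_nonneg: assumes "0 \<le> x" "x \<le> 1" shows "0 \<le> Jfun x"
proof -
  have A: "0 \<le> arcsin (sqrt (1 - x))" using assms by (intro arcsin_sqrt_nonneg) auto
  have a0: "0 \<le> a0" unfolding a0_def by (intro arcsin_sqrt_nonneg) auto
  have B: "0 \<le> sqrt ((1 - x) * x)" using assms by simp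
  have J: "Jfun x = (1 - 2*x) * arcsin (sqrt (1 - x)) + sqrt ((1 - x) * x) + 2 * a0 * x"
    by (simp add: Jfun_def a0_def)
  show ?thesis
  proof (cases "x \<le> 1/2")
    case True
    then have "0 \<le> (1 - 2*x) * arcsin (sqrt (1 - x))" using A by simp
    moreover have "0 \<le> 2 * a0 * x" using a0 assms by simp
    ultimately show ?thesis using B J by linarith
  next
    case False
    have "arcsin (sqrt (1 - x)) \<le> a0" unfolding a0_def using False assms
      by (intro arcsin_sqrt_mono) auto
    then have "(1 - 2*x) * a0 \<le> (1 - 2*x) * arcsin (sqrt (1 - x))"
      using False by (intro mult_left_mono_neg) auto
    moreover have "(1 - 2*x) * a0 + 2 * a0 * x = a0" by (simp add: algebra_simps)
    ultimately show ?thesis using B J a0 by linarith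
  qed
qed

lemma gpe_mono:
  assumes e: "0 < e" "e < 1/2" and xy: "x \<le> y"
  shows "gpe e x \<le> gpe e y"
proof -
  have p: "0 < Jpp e" using e Jpp_pos by simp
  have le1: "gpe e z \<le> Jp e" if "z < e" for z
  proof -
    have "Jpp e * (z - e) \<le> 0" using p that by (intro mult_nonneg_nonpos) auto
    then show ?thesis using that by (simp add: gpe_def)
  qed
  have ge1: "gpe e z \<ge> Jp (1 - e)" if "z > 1 - e" for z
  proof -
    have "0 \<le> Jpp (1 - e) * (z - (1 - e))" using p that by (simp add: Jpp_sym)
    then show ?thesis using that e by (simp add: gpe_def)
  qed
  have mid: "gpe e z = Jp z \<and> Jp e \<le> Jp z \<and> Jp z \<le> Jp (1 - e)" if "e \<le> z" "z \<le> 1 - e" for z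
  proof -
    have "gpe e z = Jp z" using that by (simp add: gpe_def)
    moreover have "Jp e \<le> Jp z" using that e by (intro Jp_mono) auto
    moreover have "Jp z \<le> Jp (1 - e)" using that e by (intro Jp_mono) auto
    ultimately show ?thesis by simp
  qed
  have ee: "Jp e \<le> Jp (1 - e)" using e by (intro Jp_mono) auto
  show ?thesis
  proof (cases "y < e")
    case True
    have "Jpp e * (x - e) \<le> Jpp e * (y - e)" using xy p by (simp add: mult_left_mono)
    then show ?thesis using True xy by (simp add: gpe_def)
  next
    case ny: False
    show ?thesis
    proof (cases "x > 1 - e")
      case True
      have "Jpp e * (x - (1 - e)) \<le> Jpp e * (y - (1 - e))" using xy p by (simp add: mult_left_mono)
      then show ?thesis using True xy e by (simp add: gpe_def Jpp_sym)
    next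
      case nx: False
      show ?thesis
      proof (cases "x < e")
        case xl: True
        show ?thesis
        proof (cases "y > 1 - e")
          case True then show ?thesis using le1[OF xl] ge1[of y] ee by linarith
        next
          case False then show ?thesis using le1[OF xl] mid[of y] ny by linarith
        qed
      next
        case xm: False
        show ?thesis
        proof (cases "y > 1 - e")
          case True then show ?thesis using ge1[of y] mid[of x] nx xm by linarith
        next
          case False
          have "Jp x \<le> Jp y" using nx xm xy e False by (intro Jp_mono) auto
          then show ?thesis using mid[of x] mid[of y] nx xm ny False by auto
        qed
      qed
    qed
  qed
qed

lemma Jeps_convex:
  assumes e: "0 < e" "e < 1/2"
  shows "Jeps e b - Jeps e a \<le> (b - a) * gpe e b"
proof (cases a b rule: linorder_cases)
  case less
  have "\<forall>x. a \<le> x \<and> x \<le> b \<longrightarrow> (Jeps e has_real_derivative gpe e x) (at x)"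
    using Jeps_deriv[OF e] by blast
  then obtain z where z: "a < z" "z < b" "Jeps e b - Jeps e a = (b - a) * gpe e z"
    using MVT2[OF less] by blast
  have "gpe e z \<le> gpe e b" using gpe_mono[OF e] z by simp
  then show ?thesis using z less by (simp add: mult_left_mono)
next
  case equal then show ?thesis by simp
next
  case greater
  have "\<forall>x. b \<le> x \<and> x \<le> a \<longrightarrow> (Jeps e has_real_derivative gpe e x) (at x)"
    using Jeps_deriv[OF e] by blast
  then obtain z where z: "b < z" "z < a" "Jeps e a - Jeps e b = (a - b) * gpe e z"
    using MVT2[OF greater] by blast
  have "gpe e b \<le> gpe e z" using gpe_mono[OF e] z by simp
  then have "(a - b) * gpe e b \<le> (a - b) * gpe e z" using greater by (simp add: mult_left_mono)
  then show ?thesis using z by (simp add: algebra_simps)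
qed

lemma Jeps_bounds:
  assumes e: "0 < e" "e < 1/2"
  shows "0 \<le> Jeps e x"
    and "(min x 0)\<^sup>2 \<le> 2 * sqrt (e * (1 - e)) * Jeps e x"
    and "(max (x - 1) 0)\<^sup>2 \<le> 2 * sqrt (e * (1 - e)) * Jeps e x"
proof -
  define s where "s = sqrt (e * (1 - e))"
  have s: "0 < s" using e by (simp add: s_def)
  have pp: "Jpp e = 1 / s" "Jpp (1 - e) = 1 / s" using e by (simp_all add: Jpp_def s_def mult.commute)
  have j1: "0 \<le> Jfun e" "0 \<le> Jfun (1 - e)" using e by (auto intro!: Jfun_nonneg)
  have p1: "Jp e \<le> 0" "0 \<le> Jp (1 - e)" using e Jp_le0[of e] Jp_ge0[of e] by auto
  have L: "2 * s * (Jfun e + Jp e * (x - e) + Jpp e / 2 * (x - e)\<^sup>2)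
        = 2 * s * Jfun e + 2 * s * (Jp e * (x - e)) + (x - e)\<^sup>2"
    using s unfolding pp by (simp add: field_simps)
  have R: "2 * s * (Jfun (1 - e) + Jp (1 - e) * (x - (1 - e)) + Jpp (1 - e) / 2 * (x - (1 - e))\<^sup>2)
        = 2 * s * Jfun (1 - e) + 2 * s * (Jp (1 - e) * (x - (1 - e))) + (x - (1 - e))\<^sup>2"
    using s unfolding pp by (simp add: field_simps)
  have main: "0 \<le> 2 * s * Jeps e x \<and> (min x 0)\<^sup>2 \<le> 2 * s * Jeps e x \<and> (max (x - 1) 0)\<^sup>2 \<le> 2 * s * Jeps e x"
  proof (cases "x < e")
    case True
    have a: "0 \<le> 2 * s * Jfun e" using s j1 by simp
    have "0 \<le> Jp e * (x - e)" by (rule mult_nonpos_nonpos) (use p1 True in auto)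
    then have b: "0 \<le> 2 * s * (Jp e * (x - e))" using s by simp
    have c: "(min x 0)\<^sup>2 \<le> (x - e)\<^sup>2"
    proof (cases "x \<le> 0")
      case True
      have "(x - e)\<^sup>2 - x\<^sup>2 = e * (e - 2 * x)" by (simp add: power2_eq_square algebra_simps)
      moreover have "0 \<le> e * (e - 2 * x)" using True e by simp
      ultimately show ?thesis using True by simp
    qed simp
    have d: "max (x - 1) 0 = 0" using True e by simp
    have "2 * s * Jeps e x = 2 * s * Jfun e + 2 * s * (Jp e * (x - e)) + (x - e)\<^sup>2"
      using True e L by (simp add: Jeps_eq)
    moreover have "0 \<le> (min x 0)\<^sup>2" by simp
    ultimately show ?thesis using a b c d by (simp only: power_zero_numeral) linarith
  next
    case nl: False
    show ?thesis
    proof (cases "x > 1 - e")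
      case True
      have a: "0 \<le> 2 * s * Jfun (1 - e)" using s j1 by simp
      have b: "0 \<le> 2 * s * (Jp (1 - e) * (x - (1 - e)))" using s p1 True by simp
      have c: "(max (x - 1) 0)\<^sup>2 \<le> (x - (1 - e))\<^sup>2"
      proof (cases "x \<ge> 1")
        case True
        have "(x - (1 - e))\<^sup>2 - (x - 1)\<^sup>2 = e * (e + 2 * (x - 1))" by (simp add: power2_eq_square algebra_simps)
        moreover have "0 \<le> e * (e + 2 * (x - 1))" using True e by simp
        ultimately show ?thesis using True by simp
      qed simp
      have d: "min x 0 = 0" using True e by simp
      have "2 * s * Jeps e x = 2 * s * Jfun (1 - e) + 2 * s * (Jp (1 - e) * (x - (1 - e))) + (x - (1 - e))\<^sup>2"
        using True nl e R by (simp add: Jeps_eq)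
      moreover have "0 \<le> (max (x - 1) 0)\<^sup>2" by simp
      ultimately show ?thesis using a b c d by (simp only: power_zero_numeral) linarith
    next
      case False
      have "Jeps e x = Jfun x" using False nl e by (simp add: Jeps_eq)
      moreover have "0 \<le> Jfun x" using False nl e by (intro Jfun_nonneg) auto
      moreover have "min x 0 = 0" "max (x - 1) 0 = 0" using False nl e by auto
      ultimately show ?thesis using s by simp
    qed
  qed
  then show "0 \<le> Jeps e x" using s by (simp add: zero_le_mult_iff)
  from main show "(min x 0)\<^sup>2 \<le> 2 * sqrt (e * (1 - e)) * Jeps e x"
    and "(max (x - 1) 0)\<^sup>2 \<le> 2 * sqrt (e * (1 - e)) * Jeps e x"
    unfolding s_def by auto
qed

lemma cont_integrable:
  fixes f :: "'a::euclidean_space \<Rightarrow> real"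
  assumes "compact S" "continuous_on S f"
  shows "f integrable_on S"
proof -
  have "integrable lborel (\<lambda>x. indicator S x *\<^sub>R f x)"
    by (rule borel_integrable_compact[OF assms])
  from has_integral_integral_lborel[OF this]
  have "(\<lambda>x. indicator S x *\<^sub>R f x) integrable_on UNIV" by blast
  moreover have "(\<lambda>x. indicator S x *\<^sub>R f x) = (\<lambda>x. if x \<in> S then f x else 0)"
    by (auto simp: indicator_def)
  ultimately show ?thesis using integrable_restrict_UNIV by metis
qed

lemma compact_elem: "compact (elem_set (I :: 'd::finite elem))"
proof -
  have "finite (verts I)" unfolding verts_def by simp
  then show ?thesis unfolding elem_set_def by (intro finite_imp_compact_convex_hull)
qed

lemma p1grad_diff: "p1grad I (\<lambda>y. f y - g y) = p1grad I f - p1grad I g"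
  by (simp add: p1grad_def vec_eq_iff diff_divide_distrib)

lemma p1grad_add: "p1grad I (\<lambda>y. f y + g y) = p1grad I f + p1grad I g"
  by (simp add: p1grad_def vec_eq_iff add_divide_distrib[symmetric] algebra_simps)

lemma p1grad_cmul: "p1grad I (\<lambda>y. c * f y) = c *\<^sub>R p1grad I f"
  by (simp add: p1grad_def vec_eq_iff algebra_simps)

lemma p1loc_diff: "p1loc I (\<lambda>y. f y - g y) x = p1loc I f x - p1loc I g x"
  by (simp add: p1loc_def p1grad_diff inner_diff_left)

lemma p1loc_add: "p1loc I (\<lambda>y. f y + g y) x = p1loc I f x + p1loc I g x"
  by (simp add: p1loc_def p1grad_add inner_add_left)

lemma p1loc_cmul: "p1loc I (\<lambda>y. c * f y) x = c * p1loc I f x"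
  by (simp add: p1loc_def p1grad_cmul algebra_simps)

lemma p1grad_const: "p1grad I (\<lambda>y. c) = 0"
  by (simp add: p1grad_def vec_eq_iff)

lemma p1loc_const: "p1loc I (\<lambda>y. c) x = c"
  by (simp add: p1loc_def p1grad_const)

lemma p1loc_affine:
  assumes "u + v = 1"
  shows "p1loc I f (u *\<^sub>R x + v *\<^sub>R y) = u * p1loc I f x + v * p1loc I f y"
proof -
  have v: "v = 1 - u" using assms by simp
  have "u *\<^sub>R (x - fst I) + v *\<^sub>R (y - fst I) = u *\<^sub>R x + v *\<^sub>R y - (u + v) *\<^sub>R fst I"
    by (simp add: algebra_simps)
  then have e: "u *\<^sub>R x + v *\<^sub>R y - fst I = u *\<^sub>R (x - fst I) + v *\<^sub>R (y - fst I)"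
    using assms by simp
  show ?thesis unfolding p1loc_def e inner_add_right inner_scaleR_right v
    by (simp add: algebra_simps)
qed

lemma continuous_p1loc[continuous_intros]: "continuous_on S (p1loc I f)"
  unfolding p1loc_def by (intro continuous_intros)

lemma p1loc_vert:
  assumes "\<forall>k. snd I $ k \<noteq> 0" "z \<in> verts I"
  shows "p1loc I f z = f z"
proof -
  consider "z = fst I" | k where "z = vtx I k" using assms(2) unfolding verts_def by auto
  then show ?thesis
  proof cases
    case 1 then show ?thesis by (simp add: p1loc_def)
  next
    case 2
    have "p1loc I f z = f (fst I) + p1grad I f $ k * snd I $ k"
      by (simp add: p1loc_def 2 vtx_def inner_axis)
    also have "\<dots> = f z" using assms(1) 2 by (simp add: p1grad_def)
    finally show ?thesis .
  qed
qed

lemma p1loc_nonneg: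
  assumes "\<forall>k. snd I $ k \<noteq> 0" "\<And>y. 0 \<le> f y" "x \<in> elem_set I"
  shows "0 \<le> p1loc I f x"
proof -
  have "convex {x. 0 \<le> p1loc I f x}"
    unfolding convex_def by (auto simp: p1loc_affine)
  moreover have "verts I \<subseteq> {x. 0 \<le> p1loc I f x}"
    using assms p1loc_vert[OF assms(1)] by auto
  ultimately have "elem_set I \<subseteq> {x. 0 \<le> p1loc I f x}"
    unfolding elem_set_def by (rule hull_minimal[rotated])
  then show ?thesis using assms by auto
qed

lemma p1loc_mono:
  assumes "\<forall>k. snd I $ k \<noteq> 0" "\<And>y. f y \<le> g y" "x \<in> elem_set I"
  shows "p1loc I f x \<le> p1loc I g x"
  using p1loc_nonneg[OF assms(1), of "\<lambda>y. g y - f y" x] assms by (simp add: p1loc_diff)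

lemma p1loc_sq:
  assumes "\<forall>k. snd I $ k \<noteq> 0" "x \<in> elem_set I"
  shows "(p1loc I f x)\<^sup>2 \<le> p1loc I (\<lambda>y. (f y)\<^sup>2) x"
proof -
  let ?S = "{x. (p1loc I f x)\<^sup>2 \<le> p1loc I (\<lambda>y. (f y)\<^sup>2) x}"
  have "convex ?S"
    unfolding convex_def
  proof (intro allI impI ballI, clarify)
    fix x y :: "real^'a" and u v :: real
    assume x: "(p1loc I f x)\<^sup>2 \<le> p1loc I (\<lambda>y. (f y)\<^sup>2) x"
      and y: "(p1loc I f y)\<^sup>2 \<le> p1loc I (\<lambda>y. (f y)\<^sup>2) y"
      and u: "0 \<le> u" and v: "0 \<le> v" and uv: "u + v = 1"
    define A where "A = p1loc I f x"
    define B where "B = p1loc I f y"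
    have "(u * A + v * B)\<^sup>2 = u * A\<^sup>2 + v * B\<^sup>2 - u * v * (A - B)\<^sup>2"
      using uv by (subst (asm) add.commute, simp only: eq_diff_eq[symmetric]) (simp add: power2_eq_square algebra_simps)
    also have "\<dots> \<le> u * A\<^sup>2 + v * B\<^sup>2" using u v by simp
    also have "\<dots> \<le> u * p1loc I (\<lambda>y. (f y)\<^sup>2) x + v * p1loc I (\<lambda>y. (f y)\<^sup>2) y"
      using x y u v unfolding A_def B_def by (intro add_mono mult_left_mono) auto
    finally show "(p1loc I f (u *\<^sub>R x + v *\<^sub>R y))\<^sup>2 \<le> p1loc I (\<lambda>y. (f y)\<^sup>2) (u *\<^sub>R x + v *\<^sub>R y)"
      using uv by (simp add: p1loc_affine A_def B_def)
  qed
  moreover have "verts I \<subseteq> ?S"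
    using assms p1loc_vert[OF assms(1)] by auto
  ultimately have "elem_set I \<subseteq> ?S"
    unfolding elem_set_def by (rule hull_minimal[rotated])
  then show ?thesis using assms by auto
qed

lemma dFc_aux: "((\<lambda>p. k * (p ^ 4 - 2 * p ^ 3 + 3 / 2 * p\<^sup>2)) has_real_derivative k * (4 * p ^ 3 - 6 * p\<^sup>2 + 3 * p)) (at p)"
  by (auto intro!: derivative_eq_intros simp: algebra_simps power2_eq_square power3_eq_cube)

lemma dFe_aux: "((\<lambda>p. - k / 2 * p\<^sup>2) has_real_derivative - k * p) (at p)"
  by (auto intro!: derivative_eq_intros simp: algebra_simps power2_eq_square)

lemma deriv_Fc_k: "deriv (Fc eta) = (\<lambda>p. (1 / (4 * eta\<^sup>2)) * (4 * p ^ 3 - 6 * p\<^sup>2 + 3 * p))"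
proof
  fix p
  show "deriv (Fc eta) p = (1 / (4 * eta\<^sup>2)) * (4 * p ^ 3 - 6 * p\<^sup>2 + 3 * p)"
  proof (rule DERIV_imp_deriv)
    have e: "Fc eta = (\<lambda>p. (1 / (4 * eta\<^sup>2)) * (p ^ 4 - 2 * p ^ 3 + 3 / 2 * p\<^sup>2))"
      by (rule ext) (simp add: Fc_def)
    show "(Fc eta has_real_derivative (1 / (4 * eta\<^sup>2)) * (4 * p ^ 3 - 6 * p\<^sup>2 + 3 * p)) (at p)"
      unfolding e by (rule dFc_aux)
  qed
qed

lemma deriv_Fe_k: "deriv (Fe eta) = (\<lambda>p. - (1 / (4 * eta\<^sup>2)) * p)"
proof
  fix p
  show "deriv (Fe eta) p = - (1 / (4 * eta\<^sup>2)) * p"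
  proof (rule DERIV_imp_deriv)
    have e: "Fe eta = (\<lambda>p. - (1 / (4 * eta\<^sup>2)) / 2 * p\<^sup>2)"
      by (rule ext) (simp add: Fe_def)
    show "(Fe eta has_real_derivative - (1 / (4 * eta\<^sup>2)) * p) (at p)"
      unfolding e by (rule dFe_aux)
  qed
qed

lemma F_ineq:
  "Ffun eta a \<le> Ffun eta b + (deriv (Fc eta) a + deriv (Fe eta) b) * (a - b)"
proof -
  define k where "k = 1 / (4 * eta\<^sup>2)"
  have k: "0 \<le> k" by (simp add: k_def)
  have Fk: "\<And>x. Ffun eta x = k * (x\<^sup>2 * (x - 1)\<^sup>2)" by (simp add: Ffun_def k_def)
  define br where "br = b^4 - 2*b^3 + b\<^sup>2 + (4*a^3 - 6*a\<^sup>2 + 3*a - b)*(a - b) - (a^4 - 2*a^3 + a\<^sup>2)"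
  have br: "br = (b - a)\<^sup>2 * ((b - a + 2*a - 1)\<^sup>2 + 1/2 * (2*a - 1)\<^sup>2 + 1/2)"
    unfolding br_def by (simp add: power2_eq_square power3_eq_cube power4_eq_xxxx algebra_simps)
  have "0 \<le> br" unfolding br by simp
  then have "0 \<le> k * br" using k by simp
  moreover have "Ffun eta b + (deriv (Fc eta) a + deriv (Fe eta) b) * (a - b) - Ffun eta a = k * br"
    unfolding deriv_Fc_k deriv_Fe_k Fk k_def[symmetric] br_def
    by (simp add: power2_eq_square power3_eq_cube power4_eq_xxxx algebra_simps)
  ultimately show ?thesis by simp
qed

lemma grad_ineq:
  fixes a b :: "real^'d::finite"
  shows "(norm a)\<^sup>2 / 2 \<le> (norm b)\<^sup>2 / 2 + a \<bullet> (a - b)"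
proof -
  have "0 \<le> (a - b) \<bullet> (a - b)" by simp
  then show ?thesis
    by (simp add: power2_norm_eq_inner inner_diff_left inner_diff_right inner_commute)
qed

lemma key_aux: "(dd::real) \<noteq> 0 \<Longrightarrow> h \<noteq> 0 \<Longrightarrow> (d / dd)\<^sup>2 * g * (dd / h) = (d / dd * g) * (d / h)"
proof -
  assume a: "dd \<noteq> 0" "h \<noteq> 0"
  have "(d / dd)\<^sup>2 * g * (dd / h) = (d / dd) * ((d / dd) * dd) * g / h" by (simp add: power2_eq_square)
  also have "(d / dd) * dd = d" using a by simp
  finally show ?thesis by simp
qed

lemma key_ineq:
  fixes a b g h c :: real and D :: "real \<Rightarrow> real"
  assumes M: "M = (if b \<noteq> a then ((b - a) / (D b - D a))\<^sup>2 else c\<^sup>2)"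
  shows "- (M * g * ((D b - D a) / h)) \<le> 1/2 * (M * g * g) + 1/2 * ((b - a) / h)\<^sup>2"
proof (cases "b = a")
  case True
  have "0 \<le> c\<^sup>2 * (g * g)" by (rule mult_nonneg_nonneg) simp_all
  then show ?thesis using M True by (simp add: mult.assoc)
next
  case False
  show ?thesis
  proof (cases "D b = D a \<or> h = 0")
    case True
    then have "M * g * ((D b - D a) / h) = 0" using M by auto
    moreover have "0 \<le> M * g * g" using M by (simp add: mult.assoc)
    moreover have "0 \<le> ((b - a) / h)\<^sup>2" by simp
    ultimately show ?thesis by linarith
  next
    case nz: False
    define X where "X = (b - a) / (D b - D a) * g"
    define Y where "Y = (b - a) / h"
    have "M * g * ((D b - D a) / h) = X * Y"
      using False nz M key_aux[of "D b - D a" h "b - a" g] unfolding X_def Y_def by simp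
    moreover have "M * g * g = X\<^sup>2"
      using False M unfolding X_def by (simp add: power2_eq_square)
    moreover have "0 \<le> (X + Y)\<^sup>2" by simp
    ultimately show ?thesis unfolding Y_def[symmetric]
      by (simp add: power2_eq_square algebra_simps)
  qed
qed

lemma MJ_nonneg: "0 \<le> MJ e v I k"
  by (simp add: MJ_def Let_def)

lemma intg: fixes f :: "real^'d::finite \<Rightarrow> real" shows "continuous_on (elem_set I) f \<Longrightarrow> f integrable_on elem_set I"
  by (rule cont_integrable[OF compact_elem])

lemma mint_add:
  assumes "\<And>I. I \<in> Th \<Longrightarrow> f I integrable_on elem_set I"
    and "\<And>I. I \<in> Th \<Longrightarrow> g I integrable_on elem_set I"
  shows "mint Th (\<lambda>I x. f I x + g I x) = mint Th f + mint Th g"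
  unfolding mint_def sum.distrib[symmetric]
  by (rule sum.cong[OF refl]) (simp add: integral_add assms)

lemma mint_cmul: "mint Th (\<lambda>I x. c * f I x) = c * mint Th f"
proof -
  have "\<And>I. integral (elem_set I) (\<lambda>x. c * f I x) = c * integral (elem_set I) (f I)"
    using integral_cmul[of "elem_set _" c] by simp
  then show ?thesis unfolding mint_def by (simp add: sum_distrib_left)
qed

lemma mint_le:
  assumes "\<And>I. I \<in> Th \<Longrightarrow> f I integrable_on elem_set I"
    and "\<And>I. I \<in> Th \<Longrightarrow> g I integrable_on elem_set I"
    and "\<And>I x. I \<in> Th \<Longrightarrow> x \<in> elem_set I \<Longrightarrow> f I x \<le> g I x"
  shows "mint Th f \<le> mint Th g"
  unfolding mint_def by (intro sum_mono integral_le) (auto simp: assms)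

lemma mint_nonneg:
  assumes "\<And>I. I \<in> Th \<Longrightarrow> f I integrable_on elem_set I"
    and "\<And>I x. I \<in> Th \<Longrightarrow> x \<in> elem_set I \<Longrightarrow> 0 \<le> f I x"
  shows "0 \<le> mint Th f"
  unfolding mint_def by (intro sum_nonneg integral_nonneg) (auto simp: assms)

lemma norm_sq_sum: "(norm (x :: real^'d::finite))\<^sup>2 = (\<Sum>k\<in>UNIV. (x $ k)\<^sup>2)"
  unfolding power2_norm_eq_inner inner_vec_def by (simp add: power2_eq_square)

lemma Ffun_k: "Ffun eta = (\<lambda>x. (1 / (4 * eta\<^sup>2)) * (x\<^sup>2 * (x - 1)\<^sup>2))"
  by (rule ext) (simp add: Ffun_def)

lemma MJ_sq_nonneg: "0 \<le> MJ e v I k * g * g"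
  using MJ_nonneg[of e v I k] by (simp add: mult.assoc)

lemma deriv_Jeps_fun: "0 < e \<Longrightarrow> e < 1/2 \<Longrightarrow> deriv (Jeps e) = gpe e"
  by (rule ext) (rule deriv_Jeps)

lemma step:
  assumes mesh: "structured_mesh Om Th" and e: "0 < e" "e < 1/2" and dt: "0 < dt"
    and st: "Jeps_step eta e Th dt u v w"
  shows "\<exists>Q\<ge>0. energy eta Th v + dt * Q \<le> energy eta Th u \<and>
           Jint e Th v \<le> Jint e Th u + dt * (Q / 2 + energy eta Th v)"
proof -
  have hk: "\<forall>k. snd I $ k \<noteq> 0" if "I \<in> Th" for I using mesh that by (auto simp: structured_mesh_def)
  from st have eq1: "\<And>mubar. lumped Th (\<lambda>y. v y - u y) mubar / dt
        + mint Th (\<lambda>I x. \<Sum>k\<in>UNIV. MJ e v I k * (p1grad I w $ k) * (p1grad I mubar $ k)) = 0"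
   and eq2: "\<And>phibar. mint Th (\<lambda>I x. p1grad I v \<bullet> p1grad I phibar)
        + mint Th (\<lambda>I x. (deriv (Fc eta) (p1loc I v x) + deriv (Fe eta) (p1loc I u x)) * p1loc I phibar x)
        = lumped Th w phibar"
    unfolding Jeps_step_def by blast+
  define Q where "Q = mint Th (\<lambda>I x. \<Sum>k\<in>UNIV. MJ e v I k * (p1grad I w $ k) * (p1grad I w $ k))"
  have Q0: "0 \<le> Q" unfolding Q_def
    by (rule mint_nonneg) (auto intro!: intg sum_nonneg MJ_sq_nonneg)
  have lw: "lumped Th (\<lambda>y. v y - u y) w = - dt * Q"
    using eq1[of w] dt unfolding Q_def by (simp add: field_simps)
  have comm: "lumped Th w (\<lambda>y. v y - u y) = lumped Th (\<lambda>y. v y - u y) w"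
    by (simp add: lumped_def mult.commute)
  define A where "A = (\<lambda>I (x::real^'a). p1grad I v \<bullet> p1grad I (\<lambda>y. v y - u y))"
  define B where "B = (\<lambda>I x. (deriv (Fc eta) (p1loc I v x) + deriv (Fe eta) (p1loc I u x)) * p1loc I (\<lambda>y. v y - u y) x)"
  have e2: "mint Th A + mint Th B = - dt * Q"
    using eq2[of "\<lambda>y. v y - u y"] comm lw unfolding A_def B_def by simp
  define Ev where "Ev = (\<lambda>I x. (norm (p1grad I v))\<^sup>2 / 2 + Ffun eta (p1loc I v x))"
  define Eu where "Eu = (\<lambda>I x. (norm (p1grad I u))\<^sup>2 / 2 + Ffun eta (p1loc I u x))"
  have iEv: "Ev I integrable_on elem_set I" for I
    unfolding Ev_def Ffun_k by (intro intg continuous_intros)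
  have iEu: "Eu I integrable_on elem_set I" for I
    unfolding Eu_def Ffun_k by (intro intg continuous_intros)
  have iA: "A I integrable_on elem_set I" for I
    unfolding A_def by (intro intg continuous_intros)
  have iB: "B I integrable_on elem_set I" for I
    unfolding B_def deriv_Fc_k deriv_Fe_k by (intro intg continuous_intros)
  have En: "energy eta Th v \<le> energy eta Th u - dt * Q"
  proof -
    have "energy eta Th v = mint Th Ev" by (simp add: energy_def Ev_def)
    also have "\<dots> \<le> mint Th (\<lambda>I x. Eu I x + (A I x + B I x))"
    proof (rule mint_le)
      show "\<And>I. Ev I integrable_on elem_set I" by (rule iEv)
      show "\<And>I. (\<lambda>x. Eu I x + (A I x + B I x)) integrable_on elem_set I"
        by (intro integrable_add iEu iA iB)
      fix I x
      have g: "(norm (p1grad I v))\<^sup>2 / 2 \<le> (norm (p1grad I u))\<^sup>2 / 2 + A I x"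
        unfolding A_def p1grad_diff by (rule grad_ineq)
      have f: "Ffun eta (p1loc I v x) \<le> Ffun eta (p1loc I u x) + B I x"
        unfolding B_def p1loc_diff by (rule F_ineq)
      show "Ev I x \<le> Eu I x + (A I x + B I x)"
        using g f unfolding Ev_def Eu_def by linarith
    qed
    also have "\<dots> = mint Th Eu + (mint Th A + mint Th B)"
      by (subst mint_add) (auto intro: integrable_add iEu iA iB simp: mint_add iA iB)
    also have "mint Th Eu = energy eta Th u" by (simp add: energy_def Eu_def)
    finally show ?thesis using e2 by simp
  qed
  have gd: "deriv (Jeps e) = gpe e" using e by (rule deriv_Jeps_fun)
  define gv where "gv = (\<lambda>y. gpe e (v y))"
  define R where "R = mint Th (\<lambda>I x. \<Sum>k\<in>UNIV. MJ e v I k * (p1grad I w $ k) * (p1grad I gv $ k))"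
  have lg: "lumped Th (\<lambda>y. v y - u y) gv = - dt * R"
    using eq1[of gv] dt unfolding R_def by (simp add: field_simps)
  have cv: "Jeps e (v y) \<le> Jeps e (u y) + (v y - u y) * gv y" for y
    using Jeps_convex[OF e, of "v y" "u y"] unfolding gv_def by linarith
  have J1: "Jint e Th v \<le> Jint e Th u + lumped Th (\<lambda>y. v y - u y) gv"
  proof -
    have "Jint e Th v \<le> mint Th (\<lambda>I x. p1loc I (\<lambda>y. Jeps e (u y)) x + p1loc I (\<lambda>y. (v y - u y) * gv y) x)"
      unfolding Jint_def
    proof (rule mint_le)
      fix I x assume I: "I \<in> Th" and x: "x \<in> elem_set I"
      have "p1loc I (\<lambda>y. Jeps e (v y)) x \<le> p1loc I (\<lambda>y. Jeps e (u y) + (v y - u y) * gv y) x"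
        by (rule p1loc_mono[OF hk[OF I] cv x])
      then show "p1loc I (\<lambda>y. Jeps e (v y)) x \<le> p1loc I (\<lambda>y. Jeps e (u y)) x + p1loc I (\<lambda>y. (v y - u y) * gv y) x"
        by (simp add: p1loc_add)
    qed (auto intro!: intg continuous_intros)
    also have "\<dots> = Jint e Th u + lumped Th (\<lambda>y. v y - u y) gv"
      unfolding Jint_def lumped_def by (rule mint_add) (auto intro!: intg continuous_intros)
    finally show ?thesis .
  qed
  have R1: "- R \<le> Q / 2 + energy eta Th v"
  proof -
    have "- R = mint Th (\<lambda>I x. - (\<Sum>k\<in>UNIV. MJ e v I k * (p1grad I w $ k) * (p1grad I gv $ k)))"
      unfolding R_def mint_def by (simp add: sum_negf)
    also have "\<dots> \<le> mint Th (\<lambda>I x. 1/2 * (\<Sum>k\<in>UNIV. MJ e v I k * (p1grad I w $ k) * (p1grad I w $ k)) + Ev I x)"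
    proof (rule mint_le)
      fix I x assume I: "I \<in> Th" and x: "x \<in> elem_set I"
      have kk: "- (MJ e v I k * (p1grad I w $ k) * (p1grad I gv $ k))
           \<le> 1/2 * (MJ e v I k * (p1grad I w $ k) * (p1grad I w $ k)) + 1/2 * (p1grad I v $ k)\<^sup>2" for k
      proof -
        have "p1grad I gv $ k = (gpe e (v (vtx I k)) - gpe e (v (fst I))) / snd I $ k"
          by (simp add: p1grad_def gv_def)
        moreover have "p1grad I v $ k = (v (vtx I k) - v (fst I)) / snd I $ k"
          by (simp add: p1grad_def)
        moreover have "MJ e v I k = (if v (vtx I k) \<noteq> v (fst I)
              then ((v (vtx I k) - v (fst I)) / (gpe e (v (vtx I k)) - gpe e (v (fst I))))\<^sup>2
              else (1 / deriv (gpe e) (v (fst I)))\<^sup>2)"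
          by (simp add: MJ_def Let_def gd)
        ultimately show ?thesis
          using key_ineq[of "MJ e v I k" "v (vtx I k)" "v (fst I)" "gpe e" "1 / deriv (gpe e) (v (fst I))"
                 "p1grad I w $ k" "snd I $ k"] by simp
      qed
      have "- (\<Sum>k\<in>UNIV. MJ e v I k * (p1grad I w $ k) * (p1grad I gv $ k))
          = (\<Sum>k\<in>UNIV. - (MJ e v I k * (p1grad I w $ k) * (p1grad I gv $ k)))"
        by (simp add: sum_negf)
      also have "\<dots> \<le> (\<Sum>k\<in>UNIV. 1/2 * (MJ e v I k * (p1grad I w $ k) * (p1grad I w $ k)) + 1/2 * (p1grad I v $ k)\<^sup>2)"
        by (rule sum_mono) (rule kk)
      also have "\<dots> = 1/2 * (\<Sum>k\<in>UNIV. MJ e v I k * (p1grad I w $ k) * (p1grad I w $ k)) + (norm (p1grad I v))\<^sup>2 / 2"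
        by (simp add: sum.distrib sum_distrib_left norm_sq_sum sum_divide_distrib[symmetric])
      also have "\<dots> \<le> 1/2 * (\<Sum>k\<in>UNIV. MJ e v I k * (p1grad I w $ k) * (p1grad I w $ k)) + Ev I x"
        unfolding Ev_def Ffun_def by simp
      finally show "- (\<Sum>k\<in>UNIV. MJ e v I k * (p1grad I w $ k) * (p1grad I gv $ k))
          \<le> 1/2 * (\<Sum>k\<in>UNIV. MJ e v I k * (p1grad I w $ k) * (p1grad I w $ k)) + Ev I x" .
    next
      fix I :: "'a elem"
      show "(\<lambda>x. 1/2 * (\<Sum>k\<in>UNIV. MJ e v I k * (p1grad I w $ k) * (p1grad I w $ k)) + Ev I x) integrable_on elem_set I"
        by (rule integrable_add[OF _ iEv]) (intro intg continuous_intros)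
    qed (intro intg continuous_intros)
    also have "\<dots> = mint Th (\<lambda>I x. 1/2 * (\<Sum>k\<in>UNIV. MJ e v I k * (p1grad I w $ k) * (p1grad I w $ k))) + mint Th Ev"
      by (rule mint_add) (intro intg continuous_intros, rule iEv)
    also have "mint Th (\<lambda>I x. 1/2 * (\<Sum>k\<in>UNIV. MJ e v I k * (p1grad I w $ k) * (p1grad I w $ k))) = 1/2 * Q"
      unfolding Q_def by (rule mint_cmul)
    also have "mint Th Ev = energy eta Th v" by (simp add: energy_def Ev_def)
    finally have "- R \<le> 1/2 * Q + energy eta Th v" .
    then show ?thesis by simp
  qed
  have "Jint e Th v \<le> Jint e Th u + dt * (Q / 2 + energy eta Th v)"
  proof -
    have "dt * (- R) \<le> dt * (Q / 2 + energy eta Th v)" using R1 dt by (intro mult_left_mono) auto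
    then show ?thesis using J1 lg by simp
  qed
  then show ?thesis using En Q0 by (intro exI[of _ Q]) auto
qed

lemma Ffun_nonneg: "0 \<le> Ffun eta x"
  by (simp add: Ffun_def)

lemma energy_nonneg: "0 \<le> energy eta Th u"
  unfolding energy_def
proof (rule mint_nonneg)
  show "(\<lambda>x. (norm (p1grad I u))\<^sup>2 / 2 + Ffun eta (p1loc I u x)) integrable_on elem_set I" for I
    unfolding Ffun_k by (intro intg continuous_intros)
  show "0 \<le> (norm (p1grad I u))\<^sup>2 / 2 + Ffun eta (p1loc I u x)" for I x
    using Ffun_nonneg[of eta "p1loc I u x"] by simp
qed

lemma Jint_nonneg:
  assumes mesh: "structured_mesh Om Th" and e: "0 < e" "e < 1/2"
  shows "0 \<le> Jint e Th u"
proof -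
  have hk: "\<forall>k. snd I $ k \<noteq> 0" if "I \<in> Th" for I using mesh that by (auto simp: structured_mesh_def)
  show ?thesis unfolding Jint_def
    by (rule mint_nonneg) (auto intro!: intg continuous_intros p1loc_nonneg hk Jeps_bounds(1)[OF e])
qed

lemma neg_bound:
  assumes mesh: "structured_mesh Om Th" and e: "0 < e" "e < 1/2"
  shows "neg_sq Th u \<le> 2 * sqrt (e * (1 - e)) * Jint e Th u"
proof -
  have hk: "\<forall>k. snd I $ k \<noteq> 0" if "I \<in> Th" for I using mesh that by (auto simp: structured_mesh_def)
  have "neg_sq Th u \<le> mint Th (\<lambda>I x. 2 * sqrt (e * (1 - e)) * p1loc I (\<lambda>y. Jeps e (u y)) x)"
    unfolding neg_sq_def
  proof (rule mint_le)
    fix I x assume I: "I \<in> Th" and x: "x \<in> elem_set I"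
    have "(p1loc I (\<lambda>y. min (u y) 0) x)\<^sup>2 \<le> p1loc I (\<lambda>y. (min (u y) 0)\<^sup>2) x"
      by (rule p1loc_sq[OF hk[OF I] x])
    also have "\<dots> \<le> p1loc I (\<lambda>y. 2 * sqrt (e * (1 - e)) * Jeps e (u y)) x"
      by (rule p1loc_mono[OF hk[OF I] _ x]) (rule Jeps_bounds(2)[OF e])
    also have "\<dots> = 2 * sqrt (e * (1 - e)) * p1loc I (\<lambda>y. Jeps e (u y)) x"
      by (rule p1loc_cmul)
    finally show "(p1loc I (\<lambda>y. min (u y) 0) x)\<^sup>2 \<le> 2 * sqrt (e * (1 - e)) * p1loc I (\<lambda>y. Jeps e (u y)) x" .
  qed (intro intg continuous_intros)+
  also have "\<dots> = 2 * sqrt (e * (1 - e)) * Jint e Th u"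
    unfolding Jint_def by (rule mint_cmul)
  finally show ?thesis .
qed

lemma pos_bound:
  assumes mesh: "structured_mesh Om Th" and e: "0 < e" "e < 1/2"
  shows "pos_sq Th u \<le> 2 * sqrt (e * (1 - e)) * Jint e Th u"
proof -
  have hk: "\<forall>k. snd I $ k \<noteq> 0" if "I \<in> Th" for I using mesh that by (auto simp: structured_mesh_def)
  have "pos_sq Th u \<le> mint Th (\<lambda>I x. 2 * sqrt (e * (1 - e)) * p1loc I (\<lambda>y. Jeps e (u y)) x)"
    unfolding pos_sq_def
  proof (rule mint_le)
    fix I x assume I: "I \<in> Th" and x: "x \<in> elem_set I"
    have "(p1loc I (\<lambda>y. max (u y - 1) 0) x)\<^sup>2 \<le> p1loc I (\<lambda>y. (max (u y - 1) 0)\<^sup>2) x"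
      by (rule p1loc_sq[OF hk[OF I] x])
    also have "\<dots> \<le> p1loc I (\<lambda>y. 2 * sqrt (e * (1 - e)) * Jeps e (u y)) x"
      by (rule p1loc_mono[OF hk[OF I] _ x]) (rule Jeps_bounds(3)[OF e])
    also have "\<dots> = 2 * sqrt (e * (1 - e)) * p1loc I (\<lambda>y. Jeps e (u y)) x"
      by (rule p1loc_cmul)
    finally show "(p1loc I (\<lambda>y. max (u y - 1) 0) x)\<^sup>2 \<le> 2 * sqrt (e * (1 - e)) * p1loc I (\<lambda>y. Jeps e (u y)) x" .
  qed (intro intg continuous_intros)+
  also have "\<dots> = 2 * sqrt (e * (1 - e)) * Jint e Th u"
    unfolding Jint_def by (rule mint_cmul)
  finally show ?thesis .
qed

lemma iterate:
  assumes mesh: "structured_mesh Om Th" and e: "0 < e" "e < 1/2" and dt: "0 < dt"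
    and st: "\<forall>n<N. Jeps_step eta e Th dt (phi n) (phi (Suc n)) (mu (Suc n))"
  shows "m \<le> N \<Longrightarrow> \<exists>S\<ge>0. energy eta Th (phi m) + S \<le> energy eta Th (phi 0) \<and>
      Jint e Th (phi m) \<le> Jint e Th (phi 0) + S / 2 + real m * dt * energy eta Th (phi 0)"
proof (induction m)
  case 0
  then show ?case by (intro exI[of _ 0]) auto
next
  case (Suc m)
  then obtain S where S: "S \<ge> 0" "energy eta Th (phi m) + S \<le> energy eta Th (phi 0)"
    "Jint e Th (phi m) \<le> Jint e Th (phi 0) + S / 2 + real m * dt * energy eta Th (phi 0)" by auto
  have "m < N" using Suc by simp
  then obtain Q where Q: "Q \<ge> 0" "energy eta Th (phi (Suc m)) + dt * Q \<le> energy eta Th (phi m)"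
    "Jint e Th (phi (Suc m)) \<le> Jint e Th (phi m) + dt * (Q / 2 + energy eta Th (phi (Suc m)))"
    using step[OF mesh e dt] st by blast
  have dq: "0 \<le> dt * Q" using dt Q by simp
  have en: "energy eta Th (phi (Suc m)) \<le> energy eta Th (phi 0)" using S Q dq by linarith
  have "dt * energy eta Th (phi (Suc m)) \<le> dt * energy eta Th (phi 0)"
    using en dt by (intro mult_left_mono) auto
  moreover have "real (Suc m) * dt * energy eta Th (phi 0) = real m * dt * energy eta Th (phi 0) + dt * energy eta Th (phi 0)"
    by (simp add: algebra_simps)
  ultimately have "Jint e Th (phi (Suc m)) \<le> Jint e Th (phi 0) + (S + dt * Q) / 2 + real (Suc m) * dt * energy eta Th (phi 0)"
    using S(3) Q(3) by (simp add: distrib_left add_divide_distrib)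
  moreover have "energy eta Th (phi (Suc m)) + (S + dt * Q) \<le> energy eta Th (phi 0)"
    using S Q by linarith
  moreover have "0 \<le> S + dt * Q" using S dq by simp
  ultimately show ?case by blast
qed

theorem corollary2:
  fixes \<Omega> :: "(real^'d::finite) set" and T \<eta> :: real
  assumes "CARD('d) \<le> 3" and "T > 0" and "\<eta> > 0"
  shows "\<exists>C :: real \<Rightarrow> real \<Rightarrow> real.
    \<forall>(Th :: 'd elem set) \<epsilon> (N :: nat) (phi :: nat \<Rightarrow> real^'d \<Rightarrow> real) mu.
      structured_mesh \<Omega> Th \<and> 0 < \<epsilon> \<and> \<epsilon> < 1 / 2 \<and> N \<ge> 1 \<and>
      (\<forall>n<N. Jeps_step \<eta> \<epsilon> Th (T / real N) (phi n) (phi (Suc n)) (mu (Suc n)))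
      \<longrightarrow> (\<forall>n<N.
            neg_sq Th (phi (Suc n))
              \<le> C (energy \<eta> Th (phi 0)) (Jint \<epsilon> Th (phi 0)) * sqrt (\<epsilon> * (1 - \<epsilon>)) \<and>
            pos_sq Th (phi (Suc n))
              \<le> C (energy \<eta> Th (phi 0)) (Jint \<epsilon> Th (phi 0)) * sqrt (\<epsilon> * (1 - \<epsilon>)) \<and>
            C (energy \<eta> Th (phi 0)) (Jint \<epsilon> Th (phi 0)) * sqrt (\<epsilon> * (1 - \<epsilon>))
              \<le> C (energy \<eta> Th (phi 0)) (Jint \<epsilon> Th (phi 0)) * sqrt \<epsilon>)"
proof (intro exI[of _ "\<lambda>a b. 2 * (b + a / 2 + T * a)"] allI impI)
  fix Th :: "'d elem set" and \<epsilon> :: real and N :: nat and phi :: "nat \<Rightarrow> real^'d \<Rightarrow> real" and mu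
  fix n :: nat
  assume H: "structured_mesh \<Omega> Th \<and> 0 < \<epsilon> \<and> \<epsilon> < 1 / 2 \<and> N \<ge> 1 \<and>
      (\<forall>n<N. Jeps_step \<eta> \<epsilon> Th (T / real N) (phi n) (phi (Suc n)) (mu (Suc n)))"
  then have mesh: "structured_mesh \<Omega> Th" and e: "0 < \<epsilon>" "\<epsilon> < 1/2" and N: "N \<ge> 1"
    and st: "\<forall>n<N. Jeps_step \<eta> \<epsilon> Th (T / real N) (phi n) (phi (Suc n)) (mu (Suc n))" by auto
  define dt where "dt = T / real N"
  have dt: "0 < dt" using N assms(2) by (simp add: dt_def)
  define E0 where "E0 = energy \<eta> Th (phi 0)"
  define J0 where "J0 = Jint \<epsilon> Th (phi 0)"
  define s where "s = sqrt (\<epsilon> * (1 - \<epsilon>))"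
  have s0: "0 \<le> s" using e by (simp add: s_def)
  have E0: "0 \<le> E0" unfolding E0_def by (rule energy_nonneg)
  assume n: "n < N"
  obtain S where S: "S \<ge> 0" "energy \<eta> Th (phi (Suc n)) + S \<le> E0"
      "Jint \<epsilon> Th (phi (Suc n)) \<le> J0 + S / 2 + real (Suc n) * dt * E0"
    using iterate[OF mesh e dt st[folded dt_def], of "Suc n"] n unfolding E0_def J0_def by auto
  have SE: "S \<le> E0" using S energy_nonneg[of \<eta> Th "phi (Suc n)"] by linarith
  have "real (Suc n) * dt \<le> real N * dt" using n dt by (intro mult_right_mono) auto
  also have "real N * dt = T" using N by (simp add: dt_def)
  finally have "real (Suc n) * dt * E0 \<le> T * E0" using E0 by (intro mult_right_mono) auto
  then have JB: "Jint \<epsilon> Th (phi (Suc n)) \<le> J0 + E0 / 2 + T * E0" using S SE by linarith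
  have Jn: "0 \<le> Jint \<epsilon> Th (phi (Suc n))" by (rule Jint_nonneg[OF mesh e])
  define C where "C = 2 * (J0 + E0 / 2 + T * E0)"
  have "0 \<le> J0 + E0 / 2 + T * E0" using JB Jn by linarith
  then have C0: "0 \<le> C" unfolding C_def by simp
  have "2 * Jint \<epsilon> Th (phi (Suc n)) \<le> C" using JB unfolding C_def by simp
  from mult_left_mono[OF this s0]
  have key: "2 * s * Jint \<epsilon> Th (phi (Suc n)) \<le> C * s" by (simp add: mult_ac)
  have "neg_sq Th (phi (Suc n)) \<le> C * s"
    using neg_bound[OF mesh e, of "phi (Suc n)"] key unfolding s_def by linarith
  moreover have "pos_sq Th (phi (Suc n)) \<le> C * s"
    using pos_bound[OF mesh e, of "phi (Suc n)"] key unfolding s_def by linarith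
  moreover have "C * s \<le> C * sqrt \<epsilon>"
  proof (rule mult_left_mono[OF _ C0])
    show "s \<le> sqrt \<epsilon>" unfolding s_def using e by (simp add: mult_le_cancel_left1)
  qed
  ultimately show "neg_sq Th (phi (Suc n))
              \<le> 2 * (Jint \<epsilon> Th (phi 0) + energy \<eta> Th (phi 0) / 2 + T * energy \<eta> Th (phi 0)) * sqrt (\<epsilon> * (1 - \<epsilon>)) \<and>
            pos_sq Th (phi (Suc n))
              \<le> 2 * (Jint \<epsilon> Th (phi 0) + energy \<eta> Th (phi 0) / 2 + T * energy \<eta> Th (phi 0)) * sqrt (\<epsilon> * (1 - \<epsilon>)) \<and>
            2 * (Jint \<epsilon> Th (phi 0) + energy \<eta> Th (phi 0) / 2 + T * energy \<eta> Th (phi 0)) * sqrt (\<epsilon> * (1 - \<epsilon>))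
              \<le> 2 * (Jint \<epsilon> Th (phi 0) + energy \<eta> Th (phi 0) / 2 + T * energy \<eta> Th (phi 0)) * sqrt \<epsilon>"
    unfolding C_def s_def E0_def J0_def by simp
qed

end
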